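(* Let $G=(V,E)$ be a finite graph with $V=\{1,\dots,n\}$, special vertex $i\in V$, symmetric edge weights $w_E:V\times V\to[0,\infty)$ with $w_E(u,v)=0$ whenever $uv\notin E$, and vertex weights $w_V:V\to[0,\infty)$ not identically zero. Suppose $G$ is positively connected. Then a function $g:V\to\mathbb{R}$ with $g(i)=0$ and $\|g\|_w=1$ is a solution of $$\min_{\|g\|_w=1,\ g(i)=0}\ \sum_{jk\in E} w_E(j,k)\,(g(k)-g(j))^2$$ if and only if the vector $(g(j))_{j\in V\setminus\{i\}}$ is an eigenvector of $L_i^{-1}W_{V,i}$ associated with its largest eigenvalue.
   Context: $\|g\|_w=\sqrt{\sum_{u\in V}w_V(u)g(u)^2}$. Each edge is counted once in the sum. $L=D-W_E$ is the weighted Laplacian, where $W_E=(w_E(u,v))$ and $D$ is diagonal with $d(k)=\sum_j w_E(k,j)$; $L_i$ is $L$ with row and column $i$ deleted (it is invertible when $G$ is positively connected); $W_{V,i}$ is the diagonal matrix of $w_V$ with row and column $i$ deleted. $G$ is positively connected if any two vertices are joined by a path all of whose edges have positive weight. The eigenvalues of $L_i^{-1}W_{V,i}$ are real. *)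

theory Defs
  imports "Jordan_Normal_Form.Char_Poly" "Jordan_Normal_Form.Gauss_Jordan_Elimination"
begin

(* Vertices are {0..<n} (0-based version of {1,...,n}); edges are 2-element subsets. *)

definition simple_graph :: "nat \<Rightarrow> nat set set \<Rightarrow> bool" where
  "simple_graph n E \<longleftrightarrow> (\<forall>e\<in>E. e \<subseteq> {0..<n} \<and> card e = 2)"

definition wnorm :: "nat \<Rightarrow> (nat \<Rightarrow> real) \<Rightarrow> (nat \<Rightarrow> real) \<Rightarrow> real" where
  "wnorm n wV g = sqrt (\<Sum>u\<in>{0..<n}. wV u * (g u)^2)"

(* each edge {j,k} counted once *)
definition energy :: "nat set set \<Rightarrow> (nat \<Rightarrow> nat \<Rightarrow> real) \<Rightarrow> (nat \<Rightarrow> real) \<Rightarrow> real" where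
  "energy E wE g = (\<Sum>e\<in>E. (\<Sum>(j,k)\<in>{(j,k). e = {j,k} \<and> j < k}. wE j k * (g k - g j)^2))"

definition positively_connected :: "nat \<Rightarrow> (nat \<Rightarrow> nat \<Rightarrow> real) \<Rightarrow> bool" where
  "positively_connected n wE \<longleftrightarrow>
     (\<forall>u\<in>{0..<n}. \<forall>v\<in>{0..<n}.
        (\<lambda>x y. x < n \<and> y < n \<and> wE x y > 0)\<^sup>*\<^sup>* u v)"

definition laplacian :: "nat \<Rightarrow> (nat \<Rightarrow> nat \<Rightarrow> real) \<Rightarrow> real mat" where
  "laplacian n wE = mat n n (\<lambda>(k,j). (if k = j then (\<Sum>l\<in>{0..<n}. wE k l) else 0) - wE k j)"

definition vweight_mat :: "nat \<Rightarrow> (nat \<Rightarrow> real) \<Rightarrow> real mat" where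
  "vweight_mat n wV = mat n n (\<lambda>(k,j). if k = j then wV k else 0)"

(* index r of the reduced object corresponds to vertex skip i r *)
definition skip :: "nat \<Rightarrow> nat \<Rightarrow> nat" where
  "skip i r = (if r < i then r else r + 1)"

definition del_rc :: "nat \<Rightarrow> 'a mat \<Rightarrow> 'a mat" where
  "del_rc i A = mat (dim_row A - 1) (dim_col A - 1) (\<lambda>(r,c). A $$ (skip i r, skip i c))"

definition del_vec :: "nat \<Rightarrow> nat \<Rightarrow> (nat \<Rightarrow> real) \<Rightarrow> real vec" where
  "del_vec n i g = vec (n - 1) (\<lambda>r. g (skip i r))"

definition minimizer :: "nat \<Rightarrow> nat set set \<Rightarrow> (nat \<Rightarrow> nat \<Rightarrow> real) \<Rightarrow> (nat \<Rightarrow> real) \<Rightarrow> nat \<Rightarrow> (nat \<Rightarrow> real) \<Rightarrow> bool" where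
  "minimizer n E wE wV i g \<longleftrightarrow> wnorm n wV g = 1 \<and> g i = 0 \<and>
     (\<forall>h. wnorm n wV h = 1 \<and> h i = 0 \<longrightarrow> energy E wE g \<le> energy E wE h)"

end

theory Submission
  imports Defs "HOL-Analysis.Function_Topology"
begin


definition Qf :: "nat \<Rightarrow> (nat \<Rightarrow> nat \<Rightarrow> real) \<Rightarrow> (nat \<Rightarrow> real) \<Rightarrow> real" where
  "Qf n wE h = (\<Sum>j\<in>{0..<n}. \<Sum>k\<in>{0..<n}. wE j k * (h k - h j)^2) / 2"

definition Nf :: "nat \<Rightarrow> (nat \<Rightarrow> real) \<Rightarrow> (nat \<Rightarrow> real) \<Rightarrow> real" where
  "Nf n wV h = (\<Sum>u\<in>{0..<n}. wV u * (h u)^2)"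

definition Lf :: "nat \<Rightarrow> (nat \<Rightarrow> nat \<Rightarrow> real) \<Rightarrow> (nat \<Rightarrow> real) \<Rightarrow> nat \<Rightarrow> real" where
  "Lf n wE h k = (\<Sum>l\<in>{0..<n}. wE k l * (h k - h l))"

lemma quad_zero:
  fixes a b :: real
  assumes "\<And>t. 2 * t * a + t^2 * b \<ge> 0"
  shows "a = 0"
proof (rule ccontr)
  assume a: "a \<noteq> 0"
  define c where "c = \<bar>b\<bar> + 1"
  have c: "c > 0" "b \<le> c" unfolding c_def by auto
  define t where "t = - a / c"
  have "2 * t * a + t^2 * b = (- 2 * a^2 * c + a^2 * b) / c^2"
    unfolding t_def using c by (simp add: field_simps power2_eq_square)
  also have "\<dots> < 0"
  proof -
    have "a^2 > 0" using a by simp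
    hence "a^2 * b \<le> a^2 * c" using c by simp
    moreover have "a^2 * c > 0" using c \<open>a^2 > 0\<close> by simp
    ultimately have "- 2 * a^2 * c + a^2 * b < 0" by linarith
    thus ?thesis using c by (simp add: divide_neg_pos)
  qed
  finally show False using assms[of t] by simp
qed

lemma sumLf:
  assumes symw: "\<And>u v. u < n \<Longrightarrow> v < n \<Longrightarrow> wE u v = wE v u"
  shows "(\<Sum>k\<in>{0..<n}. h k * Lf n wE g k) =
    (\<Sum>j\<in>{0..<n}. \<Sum>k\<in>{0..<n}. wE j k * (h k - h j) * (g k - g j)) / 2"
proof -
  let ?S = "\<Sum>k\<in>{0..<n}. \<Sum>l\<in>{0..<n}. wE k l * h k * (g k - g l)"
  have e1: "(\<Sum>k\<in>{0..<n}. h k * Lf n wE g k) = ?S"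
    unfolding Lf_def by (simp add: sum_distrib_left algebra_simps)
  have "?S = (\<Sum>l\<in>{0..<n}. \<Sum>k\<in>{0..<n}. wE k l * h k * (g k - g l))"
    by (rule sum.swap)
  also have "\<dots> = (\<Sum>l\<in>{0..<n}. \<Sum>k\<in>{0..<n}. - (wE l k * h k * (g l - g k)))"
    by (intro sum.cong refl) (simp add: symw algebra_simps)
  finally have e2: "?S = - (\<Sum>j\<in>{0..<n}. \<Sum>k\<in>{0..<n}. wE j k * h k * (g j - g k))"
    by (simp add: sum_negf)
  have "(\<Sum>j\<in>{0..<n}. \<Sum>k\<in>{0..<n}. wE j k * (h k - h j) * (g k - g j)) =
        (\<Sum>j\<in>{0..<n}. \<Sum>k\<in>{0..<n}. wE j k * h j * (g j - g k)) -
        (\<Sum>j\<in>{0..<n}. \<Sum>k\<in>{0..<n}. wE j k * h k * (g j - g k))"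
    by (simp add: sum_subtractf[symmetric] algebra_simps)
  thus ?thesis using e1 e2 by simp
qed

lemma Qf_Lf:
  assumes symw: "\<And>u v. u < n \<Longrightarrow> v < n \<Longrightarrow> wE u v = wE v u"
  shows "Qf n wE g = (\<Sum>k\<in>{0..<n}. g k * Lf n wE g k)"
  using sumLf[where n=n and wE=wE and h=g and g=g, OF symw] unfolding Qf_def by (simp add: power2_eq_square mult.assoc)

lemma Qf_add:
  assumes symw: "\<And>u v. u < n \<Longrightarrow> v < n \<Longrightarrow> wE u v = wE v u"
  shows "Qf n wE (\<lambda>x. g x + t * h x) = Qf n wE g + 2 * t * (\<Sum>k\<in>{0..<n}. h k * Lf n wE g k) + t^2 * Qf n wE h"
proof -
  have "Qf n wE (\<lambda>x. g x + t * h x) =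
     (\<Sum>j\<in>{0..<n}. \<Sum>k\<in>{0..<n}. wE j k * (g k - g j)^2 + 2 * t * (wE j k * (h k - h j) * (g k - g j)) + t^2 * (wE j k * (h k - h j)^2)) / 2"
    unfolding Qf_def by (intro arg_cong[where f="\<lambda>x. x/2"] sum.cong refl) (simp add: power2_eq_square algebra_simps)
  also have "\<dots> = Qf n wE g + 2 * t * ((\<Sum>j\<in>{0..<n}. \<Sum>k\<in>{0..<n}. wE j k * (h k - h j) * (g k - g j)) / 2) + t^2 * Qf n wE h"
    unfolding Qf_def by (simp add: sum.distrib sum_distrib_left add_divide_distrib)
  finally show ?thesis using sumLf[where n=n and wE=wE and h=h and g=g, OF symw] by simp
qed

lemma Nf_add:
  "Nf n wV (\<lambda>x. g x + t * h x) = Nf n wV g + 2 * t * (\<Sum>k\<in>{0..<n}. h k * (wV k * g k)) + t^2 * Nf n wV h"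
  unfolding Nf_def by (simp add: sum.distrib sum_distrib_left power2_eq_square algebra_simps)

lemma Qf_scale: "Qf n wE (\<lambda>x. c * h x) = c^2 * Qf n wE h"
  unfolding Qf_def by (simp add: sum_distrib_left power2_eq_square algebra_simps)

lemma Nf_scale: "Nf n wV (\<lambda>x. c * h x) = c^2 * Nf n wV h"
  unfolding Nf_def by (simp add: sum_distrib_left power2_eq_square algebra_simps)

lemma Qf_nonneg:
  assumes "\<And>u v. u < n \<Longrightarrow> v < n \<Longrightarrow> wE u v \<ge> 0"
  shows "Qf n wE h \<ge> 0"
  unfolding Qf_def using assms by (auto intro!: sum_nonneg divide_nonneg_pos)

lemma Nf_nonneg:
  assumes "\<And>u. u < n \<Longrightarrow> wV u \<ge> 0"
  shows "Nf n wV h \<ge> 0"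
  unfolding Nf_def using assms by (auto intro!: sum_nonneg)

lemma Qf_edge:
  assumes "\<And>u v. u < n \<Longrightarrow> v < n \<Longrightarrow> wE u v \<ge> 0" "a < n" "b < n"
  shows "Qf n wE h \<ge> wE a b * (h b - h a)^2 / 2"
proof -
  have "wE a b * (h b - h a)^2 \<le> (\<Sum>k\<in>{0..<n}. wE a k * (h k - h a)^2)"
    using assms by (intro member_le_sum[of b "{0..<n}" "\<lambda>k. wE a k * (h k - h a)^2"]) auto
  also have "\<dots> \<le> (\<Sum>j\<in>{0..<n}. \<Sum>k\<in>{0..<n}. wE j k * (h k - h j)^2)"
    using assms by (intro member_le_sum[of a "{0..<n}" "\<lambda>j. \<Sum>k\<in>{0..<n}. wE j k * (h k - h j)^2"])
       (auto intro!: sum_nonneg)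
  finally show ?thesis unfolding Qf_def by (simp add: divide_right_mono)
qed

lemma Qf_cong: "(\<And>x. x < n \<Longrightarrow> g x = h x) \<Longrightarrow> Qf n wE g = Qf n wE h"
  unfolding Qf_def by (intro arg_cong[where f="\<lambda>x. x/2"] sum.cong refl) auto
lemma Nf_cong: "(\<And>x. x < n \<Longrightarrow> g x = h x) \<Longrightarrow> Nf n wV g = Nf n wV h"
  unfolding Nf_def by (intro sum.cong refl) auto



lemma edge_pair:
  assumes "e \<subseteq> {0..<(n::nat)}" "card e = 2"
  shows "\<exists>a b. a < b \<and> b < n \<and> e = {a, b}"
proof -
  obtain a b where ab: "a \<noteq> b" "e = {a, b}" using assms(2) by (auto simp: card_2_iff)
  show ?thesis
  proof (cases "a < b")
    case True thus ?thesis using ab assms(1) by auto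
  next
    case False
    hence "b < a" using ab(1) by linarith
    thus ?thesis using ab assms(1) by (intro exI[of _ b] exI[of _ a]) auto
  qed
qed

lemma energy_eq:
  assumes sg: "simple_graph n E"
    and symw: "\<And>u v. u < n \<Longrightarrow> v < n \<Longrightarrow> wE u v = wE v u"
    and off: "\<And>u v. u < n \<Longrightarrow> v < n \<Longrightarrow> {u, v} \<notin> E \<Longrightarrow> wE u v = 0"
  shows "energy E wE g = Qf n wE g"
proof -
  define F where "F = (\<lambda>(j,k). wE j k * (g k - g j)^2)"
  define P where "P = {(j,k). j < n \<and> k < n \<and> {j,k} \<in> E}"
  have EP: "E \<subseteq> Pow {0..<n}" using sg unfolding simple_graph_def by auto
  have finE: "finite E" using EP finite_subset by (metis finite_Pow_iff finite_atLeastLessThan)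
  have PS: "P \<subseteq> {0..<n} \<times> {0..<n}" unfolding P_def by auto
  have finP: "finite P" using PS finite_subset by blast
  have "(\<Sum>j\<in>{0..<n}. \<Sum>k\<in>{0..<n}. wE j k * (g k - g j)^2) = (\<Sum>p\<in>{0..<n} \<times> {0..<n}. F p)"
    unfolding F_def by (simp add: sum.cartesian_product)
  also have "\<dots> = (\<Sum>p\<in>P. F p)"
    apply (intro sum.mono_neutral_right finP PS)
    apply (auto simp: P_def F_def)
    using off by blast
  also have "\<dots> = (\<Sum>e\<in>E. \<Sum>p\<in>{p\<in>P. {fst p, snd p} = e}. F p)"
    using finP finE by (intro sum.group[symmetric]) (auto simp: P_def)
  also have "\<dots> = (\<Sum>e\<in>E. 2 * (\<Sum>(j,k)\<in>{(j,k). e = {j,k} \<and> j < k}. wE j k * (g k - g j)^2))"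
  proof (intro sum.cong refl)
    fix e assume e: "e \<in> E"
    then obtain a b where ab: "a < b" "b < n" "e = {a,b}"
      using edge_pair[of e n] sg unfolding simple_graph_def by blast
    have s1: "{p\<in>P. {fst p, snd p} = e} = {(a,b),(b,a)}"
      using ab e unfolding P_def by (auto simp: doubleton_eq_iff insert_commute)
    have s2: "{(j,k). e = {j,k} \<and> j < k} = {(a,b)}"
      using ab by (auto simp: doubleton_eq_iff)
    show "(\<Sum>p\<in>{p\<in>P. {fst p, snd p} = e}. F p) = 2 * (\<Sum>(j,k)\<in>{(j,k). e = {j,k} \<and> j < k}. wE j k * (g k - g j)^2)"
      unfolding s1 s2 using ab symw[of a b] by (simp add: F_def power2_commute)
  qed
  also have "\<dots> = 2 * energy E wE g" unfolding energy_def by (rule sum_distrib_left[symmetric])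
  finally show ?thesis unfolding Qf_def by simp
qed

lemma conn_bound1:
  assumes nn: "\<And>u v. u < n \<Longrightarrow> v < n \<Longrightarrow> wE u v \<ge> 0"
    and R: "(\<lambda>x y. x < n \<and> y < n \<and> wE x y > 0)\<^sup>*\<^sup>* i v"
  shows "\<exists>C\<ge>0. \<forall>h. h i = 0 \<longrightarrow> \<bar>h v\<bar> \<le> C * sqrt (Qf n wE h)"
  using R
proof (induction rule: rtranclp_induct)
  case base
  then show ?case by (intro exI[of _ 0]) auto
next
  case (step a b)
  then obtain C where C: "C \<ge> 0" "\<forall>h. h i = 0 \<longrightarrow> \<bar>h a\<bar> \<le> C * sqrt (Qf n wE h)" by blast
  define w where "w = wE a b"
  have w: "w > 0" "a < n" "b < n" using step(2) unfolding w_def by auto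
  show ?case
  proof (intro exI[of _ "C + sqrt (2 / w)"] conjI allI impI)
    show "0 \<le> C + sqrt (2 / w)" using C w by simp
    fix h :: "nat \<Rightarrow> real" assume hi: "h i = 0"
    have Qe: "Qf n wE h \<ge> w * (h b - h a)^2 / 2" unfolding w_def using Qf_edge[OF nn w(2,3)] .
    have "(h b - h a)^2 \<le> (2 / w) * Qf n wE h" using Qe w(1) by (simp add: field_simps)
    hence "sqrt ((h b - h a)^2) \<le> sqrt ((2 / w) * Qf n wE h)" by (rule real_sqrt_le_mono)
    moreover have "sqrt ((2 / w) * Qf n wE h) = sqrt (2 / w) * sqrt (Qf n wE h)" by (rule real_sqrt_mult)
    moreover have "sqrt ((h b - h a)^2) = \<bar>h b - h a\<bar>" by (rule real_sqrt_abs)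
    ultimately have d: "\<bar>h b - h a\<bar> \<le> sqrt (2 / w) * sqrt (Qf n wE h)" by simp
    have "\<bar>h b\<bar> \<le> \<bar>h a\<bar> + \<bar>h b - h a\<bar>" by linarith
    also have "\<dots> \<le> C * sqrt (Qf n wE h) + sqrt (2 / w) * sqrt (Qf n wE h)" using C hi d by force
    finally show "\<bar>h b\<bar> \<le> (C + sqrt (2 / w)) * sqrt (Qf n wE h)" by (simp add: algebra_simps)
  qed
qed

lemma conn_bound:
  assumes nn: "\<And>u v. u < n \<Longrightarrow> v < n \<Longrightarrow> wE u v \<ge> 0"
    and pc: "positively_connected n wE" and i: "i < n"
  shows "\<exists>C\<ge>0. \<forall>v<n. \<forall>h. h i = 0 \<longrightarrow> \<bar>h v\<bar> \<le> C * sqrt (Qf n wE h)"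
proof -
  have "\<forall>v\<in>{0..<n}. \<exists>C. C \<ge> 0 \<and> (\<forall>h. h i = 0 \<longrightarrow> \<bar>h v\<bar> \<le> C * sqrt (Qf n wE h))"
    using conn_bound1[OF nn] pc i unfolding positively_connected_def by auto
  then obtain Cf where Cf: "\<forall>v\<in>{0..<n}. Cf v \<ge> 0 \<and> (\<forall>h. h i = 0 \<longrightarrow> \<bar>h v\<bar> \<le> Cf v * sqrt (Qf n wE h))"
    by metis
  define C where "C = (\<Sum>v\<in>{0..<n}. Cf v)"
  show ?thesis
  proof (intro exI[of _ C] conjI allI impI)
    show "C \<ge> 0" unfolding C_def using Cf by (auto intro: sum_nonneg)
    fix v and h :: "nat \<Rightarrow> real" assume v: "v < n" and hi: "h i = 0"
    have "Cf v \<le> C" unfolding C_def using Cf v by (intro member_le_sum) auto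
    hence "Cf v * sqrt (Qf n wE h) \<le> C * sqrt (Qf n wE h)" using Qf_nonneg[OF nn] by (intro mult_right_mono) auto
    thus "\<bar>h v\<bar> \<le> C * sqrt (Qf n wE h)" using Cf v hi by force
  qed
qed

lemma Qf_zero:
  assumes nn: "\<And>u v. u < n \<Longrightarrow> v < n \<Longrightarrow> wE u v \<ge> 0"
    and pc: "positively_connected n wE" and i: "i < n"
    and hi: "h i = 0" and Q0: "Qf n wE h = 0" and v: "v < n"
  shows "h v = 0"
  using conn_bound[OF nn pc i] hi Q0 v by force

lemma skip_inj: "inj_on (skip i) A"
  unfolding inj_on_def skip_def by auto

lemma skip_image: "i < n \<Longrightarrow> skip i ` {0..<n-1} = {0..<n} - {i}"
proof (intro equalityI subsetI)
  fix x assume "i < n" "x \<in> skip i ` {0..<n-1}" thus "x \<in> {0..<n} - {i}" unfolding skip_def by auto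
next
  fix x assume i: "i < n" and x: "x \<in> {0..<n} - {i}"
  show "x \<in> skip i ` {0..<n-1}"
  proof (cases "x < i")
    case True thus ?thesis using i x by (intro image_eqI[of _ _ x]) (auto simp: skip_def)
  next
    case False thus ?thesis using i x by (intro image_eqI[of _ _ "x - 1"]) (auto simp: skip_def)
  qed
qed

lemma sum_skip: "i < n \<Longrightarrow> (\<Sum>r\<in>{0..<n-1}. f (skip i r)) = (\<Sum>l\<in>{0..<n} - {i}. f l)"
  using sum.reindex[OF skip_inj[of i "{0..<n-1}"], of f] skip_image[of i n] by simp

lemma sum_skip0: "i < n \<Longrightarrow> f i = 0 \<Longrightarrow> (\<Sum>r\<in>{0..<n-1}. f (skip i r)) = (\<Sum>l\<in>{0..<n}. f l)"
  using sum_skip[of i n f] sum.mono_neutral_left[of "{0..<n}" "{0..<n} - {i}" f] by auto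

lemma skip_lt: "i < n \<Longrightarrow> r < n - 1 \<Longrightarrow> skip i r < n" unfolding skip_def by auto
lemma skip_ne: "skip i r \<noteq> i" unfolding skip_def by auto

lemma lap_carrier: "laplacian n wE \<in> carrier_mat n n" unfolding laplacian_def by auto
lemma vw_carrier: "vweight_mat n wV \<in> carrier_mat n n" unfolding vweight_mat_def by auto
lemma del_rc_carrier: "A \<in> carrier_mat n n \<Longrightarrow> del_rc i A \<in> carrier_mat (n-1) (n-1)"
  unfolding del_rc_def by auto
lemma del_rc_index: "A \<in> carrier_mat n n \<Longrightarrow> r < n - 1 \<Longrightarrow> c < n - 1 \<Longrightarrow> del_rc i A $$ (r,c) = A $$ (skip i r, skip i c)"
  unfolding del_rc_def by auto
lemma del_vec_carrier[simp]: "del_vec n i g \<in> carrier_vec (n-1)" unfolding del_vec_def by auto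
lemma dim_del_vec[simp]: "dim_vec (del_vec n i g) = n - 1" unfolding del_vec_def by auto
lemma del_vec_index: "r < n - 1 \<Longrightarrow> del_vec n i g $ r = g (skip i r)" unfolding del_vec_def by auto

lemma Lmul:
  assumes i: "i < n" and gi: "g i = 0"
  shows "del_rc i (laplacian n wE) *\<^sub>v del_vec n i g = del_vec n i (Lf n wE g)"
proof (rule eq_vecI)
  have C: "del_rc i (laplacian n wE) \<in> carrier_mat (n-1) (n-1)" by (rule del_rc_carrier[OF lap_carrier])
  show "dim_vec (del_rc i (laplacian n wE) *\<^sub>v del_vec n i g) = dim_vec (del_vec n i (Lf n wE g))"
    using C by simp
  fix r assume "r < dim_vec (del_vec n i (Lf n wE g))"
  hence r: "r < n - 1" by simp
  define k where "k = skip i r"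
  have k: "k < n" unfolding k_def using skip_lt[OF i r] .
  have "(del_rc i (laplacian n wE) *\<^sub>v del_vec n i g) $ r =
      (\<Sum>c\<in>{0..<n-1}. del_rc i (laplacian n wE) $$ (r,c) * del_vec n i g $ c)"
    using C r by (simp add: mult_mat_vec_def scalar_prod_def)
  also have "\<dots> = (\<Sum>c\<in>{0..<n-1}. laplacian n wE $$ (k, skip i c) * g (skip i c))"
    by (intro sum.cong refl) (simp add: del_rc_index[OF lap_carrier r] del_vec_index k_def)
  also have "\<dots> = (\<Sum>l\<in>{0..<n}. laplacian n wE $$ (k, l) * g l)"
    by (rule sum_skip0[OF i]) (simp add: gi)
  also have "\<dots> = (\<Sum>l\<in>{0..<n}. ((if k = l then (\<Sum>m\<in>{0..<n}. wE k m) else 0) - wE k l) * g l)"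
    by (intro sum.cong refl) (simp add: laplacian_def k)
  also have "\<dots> = (\<Sum>l\<in>{0..<n}. (if k = l then (\<Sum>m\<in>{0..<n}. wE k m) * g l else 0)) - (\<Sum>l\<in>{0..<n}. wE k l * g l)"
    unfolding sum_subtractf[symmetric] by (intro sum.cong refl) (auto simp: algebra_simps)
  also have "\<dots> = (\<Sum>m\<in>{0..<n}. wE k m) * g k - (\<Sum>l\<in>{0..<n}. wE k l * g l)"
    using k by simp
  also have "\<dots> = Lf n wE g k"
    unfolding Lf_def right_diff_distrib sum_subtractf sum_distrib_right by simp
  finally show "(del_rc i (laplacian n wE) *\<^sub>v del_vec n i g) $ r = del_vec n i (Lf n wE g) $ r"
    using r by (simp add: del_vec_index k_def)
qed

lemma Wmul:
  assumes i: "i < n" and gi: "g i = 0"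
  shows "del_rc i (vweight_mat n wV) *\<^sub>v del_vec n i g = del_vec n i (\<lambda>k. wV k * g k)"
proof (rule eq_vecI)
  have C: "del_rc i (vweight_mat n wV) \<in> carrier_mat (n-1) (n-1)" by (rule del_rc_carrier[OF vw_carrier])
  show "dim_vec (del_rc i (vweight_mat n wV) *\<^sub>v del_vec n i g) = dim_vec (del_vec n i (\<lambda>k. wV k * g k))"
    using C by simp
  fix r assume "r < dim_vec (del_vec n i (\<lambda>k. wV k * g k))"
  hence r: "r < n - 1" by simp
  define k where "k = skip i r"
  have k: "k < n" unfolding k_def using skip_lt[OF i r] .
  have "(del_rc i (vweight_mat n wV) *\<^sub>v del_vec n i g) $ r =
      (\<Sum>c\<in>{0..<n-1}. del_rc i (vweight_mat n wV) $$ (r,c) * del_vec n i g $ c)"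
    using C r by (simp add: mult_mat_vec_def scalar_prod_def)
  also have "\<dots> = (\<Sum>c\<in>{0..<n-1}. vweight_mat n wV $$ (k, skip i c) * g (skip i c))"
    by (intro sum.cong refl) (simp add: del_rc_index[OF vw_carrier r] del_vec_index k_def)
  also have "\<dots> = (\<Sum>l\<in>{0..<n}. vweight_mat n wV $$ (k, l) * g l)"
    by (rule sum_skip0[OF i]) (simp add: gi)
  also have "\<dots> = (\<Sum>l\<in>{0..<n}. (if k = l then wV k * g l else 0))"
    by (intro sum.cong refl) (simp add: vweight_mat_def k)
  also have "\<dots> = wV k * g k"
    using k by simp
  finally show "(del_rc i (vweight_mat n wV) *\<^sub>v del_vec n i g) $ r = del_vec n i (\<lambda>k. wV k * g k) $ r"
    using r by (simp add: del_vec_index k_def)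
qed

definition extv :: "nat \<Rightarrow> real vec \<Rightarrow> nat \<Rightarrow> real" where
  "extv i x k = (if k < i then x $ k else if i < k then x $ (k - 1) else 0)"

lemma extv_i[simp]: "extv i x i = 0" unfolding extv_def by simp

lemma del_extv: "x \<in> carrier_vec (n-1) \<Longrightarrow> del_vec n i (extv i x) = x"
  by (intro eq_vecI) (auto simp: del_vec_def extv_def skip_def)

lemma del_vec_zero:
  assumes i: "i < n"
  shows "del_vec n i g = 0\<^sub>v (n-1) \<longleftrightarrow> (\<forall>k<n. k \<noteq> i \<longrightarrow> g k = 0)"
proof
  assume z: "del_vec n i g = 0\<^sub>v (n-1)"
  show "\<forall>k<n. k \<noteq> i \<longrightarrow> g k = 0"
  proof (intro allI impI)
    fix k assume k: "k < n" "k \<noteq> i"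
    define r where "r = (if k < i then k else k - 1)"
    have r: "r < n - 1" "skip i r = k" using k i unfolding r_def skip_def by auto
    have "del_vec n i g $ r = 0" using z r by simp
    thus "g k = 0" using r by (simp add: del_vec_index)
  qed
next
  assume "\<forall>k<n. k \<noteq> i \<longrightarrow> g k = 0"
  thus "del_vec n i g = 0\<^sub>v (n-1)"
    using skip_lt[OF i] skip_ne by (intro eq_vecI) (auto simp: del_vec_index)
qed



lemma smult_del_vec: "c \<cdot>\<^sub>v del_vec n i f = del_vec n i (\<lambda>k. c * f k)"
  by (intro eq_vecI) (auto simp: del_vec_def)

lemma del_vec_eq:
  assumes i: "i < n"
  shows "del_vec n i f = del_vec n i h \<longleftrightarrow> (\<forall>k<n. k \<noteq> i \<longrightarrow> f k = h k)"
proof -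
  have "del_vec n i f = del_vec n i h \<longleftrightarrow> del_vec n i (\<lambda>k. f k - h k) = 0\<^sub>v (n-1)"
  proof
    assume e: "del_vec n i f = del_vec n i h"
    show "del_vec n i (\<lambda>k. f k - h k) = 0\<^sub>v (n-1)"
    proof (intro eq_vecI)
      fix r assume r: "r < dim_vec (0\<^sub>v (n-1) :: real vec)"
      have "del_vec n i f $ r = del_vec n i h $ r" using e by simp
      thus "del_vec n i (\<lambda>k. f k - h k) $ r = 0\<^sub>v (n-1) $ r" using r by (simp add: del_vec_index)
    qed simp
  next
    assume z: "del_vec n i (\<lambda>k. f k - h k) = 0\<^sub>v (n-1)"
    show "del_vec n i f = del_vec n i h"
    proof (intro eq_vecI)
      fix r assume r: "r < dim_vec (del_vec n i h)"
      have "del_vec n i (\<lambda>k. f k - h k) $ r = 0" using z r by simp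
      thus "del_vec n i f $ r = del_vec n i h $ r" using r by (simp add: del_vec_index)
    qed simp
  qed
  also have "\<dots> \<longleftrightarrow> (\<forall>k<n. k \<noteq> i \<longrightarrow> f k = h k)" unfolding del_vec_zero[OF i] by simp
  finally show ?thesis .
qed

lemma Nf_eig:
  assumes symw: "\<And>u v. u < n \<Longrightarrow> v < n \<Longrightarrow> wE u v = wE v u"
    and hi: "h i = 0" and rel: "\<And>k. k < n \<Longrightarrow> k \<noteq> i \<Longrightarrow> wV k * h k = lam * Lf n wE h k"
  shows "Nf n wV h = lam * Qf n wE h"
proof -
  have "Nf n wV h = (\<Sum>k\<in>{0..<n}. h k * (wV k * h k))"
    unfolding Nf_def by (intro sum.cong refl) (simp add: power2_eq_square algebra_simps)
  also have "\<dots> = (\<Sum>k\<in>{0..<n}. lam * (h k * Lf n wE h k))"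
    by (intro sum.cong refl) (metis atLeastLessThan_iff hi mult.left_commute mult_zero_left mult_zero_right rel)
  also have "\<dots> = lam * Qf n wE h" by (simp add: Qf_Lf[where n=n and wE=wE and g=h, OF symw] sum_distrib_left)
  finally show ?thesis .
qed

context
  fixes n i :: nat and E :: "nat set set" and wE :: "nat \<Rightarrow> nat \<Rightarrow> real" and wV :: "nat \<Rightarrow> real"
  assumes sg: "simple_graph n E"
    and i: "i < n"
    and symw: "\<And>u v. u < n \<Longrightarrow> v < n \<Longrightarrow> wE u v = wE v u"
    and nn: "\<And>u v. u < n \<Longrightarrow> v < n \<Longrightarrow> wE u v \<ge> 0"
    and off: "\<And>u v. u < n \<Longrightarrow> v < n \<Longrightarrow> {u, v} \<notin> E \<Longrightarrow> wE u v = 0"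
    and vnn: "\<And>u. u < n \<Longrightarrow> wV u \<ge> 0"
    and pc: "positively_connected n wE"
begin

abbreviation "Lm \<equiv> del_rc i (laplacian n wE)"
abbreviation "Wm \<equiv> del_rc i (vweight_mat n wV)"
abbreviation "Mm \<equiv> the (mat_inverse Lm) * Wm"

lemma Lm_carrier: "Lm \<in> carrier_mat (n-1) (n-1)" by (rule del_rc_carrier[OF lap_carrier])
lemma Wm_carrier: "Wm \<in> carrier_mat (n-1) (n-1)" by (rule del_rc_carrier[OF vw_carrier])

lemma Lm_inv: "Lm * the (mat_inverse Lm) = 1\<^sub>m (n-1) \<and> the (mat_inverse Lm) * Lm = 1\<^sub>m (n-1)
   \<and> the (mat_inverse Lm) \<in> carrier_mat (n-1) (n-1)"
proof -
  have det: "det Lm \<noteq> 0"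
  proof
    assume "det Lm = 0"
    then obtain v where v: "v \<in> carrier_vec (n-1)" "v \<noteq> 0\<^sub>v (n-1)" "Lm *\<^sub>v v = 0\<^sub>v (n-1)"
      using det_0_iff_vec_prod_zero[OF Lm_carrier] by blast
    define g where "g = extv i v"
    have gi: "g i = 0" unfolding g_def by simp
    have dv: "del_vec n i g = v" unfolding g_def by (rule del_extv[OF v(1)])
    have "del_vec n i (Lf n wE g) = 0\<^sub>v (n-1)" using Lmul[where n=n and i=i and g=g and wE=wE, OF i gi] dv v(3) by simp
    hence L0: "\<forall>k<n. k \<noteq> i \<longrightarrow> Lf n wE g k = 0" using del_vec_zero[OF i] by blast
    have "Qf n wE g = (\<Sum>k\<in>{0..<n}. g k * Lf n wE g k)" by (rule Qf_Lf[OF symw])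
    also have "\<dots> = 0" using L0 gi by (intro sum.neutral) (metis atLeastLessThan_iff mult_eq_0_iff)
    finally have "Qf n wE g = 0" .
    hence "\<forall>k<n. g k = 0" using Qf_zero[where n=n and wE=wE and i=i and h=g, OF nn pc i gi] by blast
    hence "del_vec n i g = 0\<^sub>v (n-1)" using del_vec_zero[OF i] by blast
    thus False using dv v(2) by simp
  qed
  have U: "Lm \<in> Units (ring_mat TYPE(real) (n-1) undefined)"
    by (rule det_non_zero_imp_unit[OF Lm_carrier det])
  show ?thesis
  proof (cases "mat_inverse Lm")
    case None
    thus ?thesis using mat_inverse(1)[OF Lm_carrier None, of undefined] U by blast
  next
    case (Some B)
    thus ?thesis using mat_inverse(2)[OF Lm_carrier Some] by simp
  qed
qed

lemma Mm_carrier: "Mm \<in> carrier_mat (n-1) (n-1)"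
  using Lm_inv Wm_carrier by auto

lemma dimM: "dim_row Mm = n - 1" by (rule carrier_matD(1)[OF Mm_carrier])

lemma eig_iff:
  assumes gi: "g i = 0"
  shows "eigenvector Mm (del_vec n i g) lam \<longleftrightarrow>
    (\<exists>k<n. k \<noteq> i \<and> g k \<noteq> 0) \<and> (\<forall>k<n. k \<noteq> i \<longrightarrow> wV k * g k = lam * Lf n wE g k)"
proof -
  define x where "x = del_vec n i g"
  define B where "B = the (mat_inverse Lm)"
  have x: "x \<in> carrier_vec (n-1)" unfolding x_def by (rule del_vec_carrier)
  have B: "B \<in> carrier_mat (n-1) (n-1)" "Lm * B = 1\<^sub>m (n-1)" "B * Lm = 1\<^sub>m (n-1)"
    using Lm_inv unfolding B_def by auto
  have nz: "x \<noteq> 0\<^sub>v (n-1) \<longleftrightarrow> (\<exists>k<n. k \<noteq> i \<and> g k \<noteq> 0)"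
    unfolding x_def del_vec_zero[OF i] by blast
  have eq: "(B * Wm) *\<^sub>v x = lam \<cdot>\<^sub>v x \<longleftrightarrow> Wm *\<^sub>v x = lam \<cdot>\<^sub>v (Lm *\<^sub>v x)"
  proof
    assume h: "(B * Wm) *\<^sub>v x = lam \<cdot>\<^sub>v x"
    have e1: "B *\<^sub>v (Wm *\<^sub>v x) = lam \<cdot>\<^sub>v x"
      using h B(1) Wm_carrier x assoc_mult_mat_vec[of B "n-1" "n-1" Wm "n-1" x] by simp
    have "Wm *\<^sub>v x = (Lm * B) *\<^sub>v (Wm *\<^sub>v x)" unfolding B(2) using Wm_carrier x by simp
    also have "\<dots> = Lm *\<^sub>v (B *\<^sub>v (Wm *\<^sub>v x))" using B(1) Lm_carrier Wm_carrier x
      by (intro assoc_mult_mat_vec) auto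
    also have "\<dots> = lam \<cdot>\<^sub>v (Lm *\<^sub>v x)" unfolding e1 by (rule mult_mat_vec[OF Lm_carrier x])
    finally show "Wm *\<^sub>v x = lam \<cdot>\<^sub>v (Lm *\<^sub>v x)" .
  next
    assume h: "Wm *\<^sub>v x = lam \<cdot>\<^sub>v (Lm *\<^sub>v x)"
    have "(B * Wm) *\<^sub>v x = B *\<^sub>v (Wm *\<^sub>v x)" using B x Wm_carrier by simp
    also have "\<dots> = lam \<cdot>\<^sub>v (B *\<^sub>v (Lm *\<^sub>v x))" unfolding h
      by (rule mult_mat_vec[OF B(1)]) (use Lm_carrier x in simp)
    also have "B *\<^sub>v (Lm *\<^sub>v x) = x" using B x Lm_carrier
      by (metis assoc_mult_mat_vec one_mult_mat_vec)
    finally show "(B * Wm) *\<^sub>v x = lam \<cdot>\<^sub>v x" .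
  qed
  have eq2: "Wm *\<^sub>v x = lam \<cdot>\<^sub>v (Lm *\<^sub>v x) \<longleftrightarrow> (\<forall>k<n. k \<noteq> i \<longrightarrow> wV k * g k = lam * Lf n wE g k)"
    unfolding x_def Lmul[where n=n and i=i and g=g and wE=wE, OF i gi] Wmul[where n=n and i=i and g=g and wV=wV, OF i gi] smult_del_vec del_vec_eq[OF i] ..
  show ?thesis
    unfolding eigenvector_def dimM using x nz eq eq2 unfolding x_def B_def by blast
qed

lemma eig_fin: "finite {k. eigenvalue Mm k}"
proof -
  have "char_poly Mm \<noteq> 0" using degree_monic_char_poly[OF Mm_carrier] by auto
  thus ?thesis unfolding eigenvalue_root_char_poly[OF Mm_carrier] by (rule poly_roots_finite)
qed

lemma eig_ext:
  assumes "eigenvalue Mm lam"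
  shows "\<exists>h. h i = 0 \<and> (\<exists>k<n. k \<noteq> i \<and> h k \<noteq> 0) \<and> (\<forall>k<n. k \<noteq> i \<longrightarrow> wV k * h k = lam * Lf n wE h k)"
proof -
  obtain y where y: "eigenvector Mm y lam" using assms unfolding eigenvalue_def by blast
  have yc: "y \<in> carrier_vec (n-1)" using y unfolding eigenvector_def dimM by blast
  define h where "h = extv i y"
  have "del_vec n i h = y" unfolding h_def by (rule del_extv[OF yc])
  hence ev: "eigenvector Mm (del_vec n i h) lam" using y by simp
  have hi: "h i = 0" unfolding h_def by simp
  show ?thesis using eig_iff[where g=h and lam=lam, OF hi] ev hi by blast
qed

lemma key:
  assumes g0i: "g0 i = 0" and N1: "Nf n wV g0 = 1"
    and mn: "\<And>h. h i = 0 \<Longrightarrow> Nf n wV h = 1 \<Longrightarrow> Qf n wE g0 \<le> Qf n wE h"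
  shows "Qf n wE g0 > 0 \<and> eigenvector Mm (del_vec n i g0) (1 / Qf n wE g0)
     \<and> Max {k. eigenvalue Mm k} = 1 / Qf n wE g0"
proof -
  define mu where "mu = Qf n wE g0"
  have a: "mu * Nf n wV h \<le> Qf n wE h" if hi: "h i = 0" for h
  proof (cases "Nf n wV h = 0")
    case True thus ?thesis using Qf_nonneg[where n=n and wE=wE and h=h, OF nn] by simp
  next
    case False
    hence pos: "Nf n wV h > 0" using Nf_nonneg[where n=n and wV=wV and h=h, OF vnn] by simp
    define c where "c = 1 / sqrt (Nf n wV h)"
    have c2: "c^2 = 1 / Nf n wV h" unfolding c_def using pos by (simp add: power_divide)
    have "Nf n wV (\<lambda>x. c * h x) = 1" unfolding Nf_scale c2 using pos by simp
    hence "mu \<le> Qf n wE (\<lambda>x. c * h x)" unfolding mu_def using hi by (intro mn) auto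
    also have "\<dots> = Qf n wE h / Nf n wV h" unfolding Qf_scale c2 by simp
    finally show ?thesis using pos by (simp add: field_simps)
  qed
  have b: "Lf n wE g0 k = mu * (wV k * g0 k)" if k: "k < n" "k \<noteq> i" for k
  proof -
    define d where "d = (\<lambda>x::nat. if x = k then (1::real) else 0)"
    have "(\<Sum>x\<in>{0..<n}. d x * Lf n wE g0 x) = (\<Sum>x\<in>{0..<n}. if x = k then Lf n wE g0 x else 0)"
      by (intro sum.cong) (auto simp: d_def)
    hence s1: "(\<Sum>x\<in>{0..<n}. d x * Lf n wE g0 x) = Lf n wE g0 k" using k by simp
    have "(\<Sum>x\<in>{0..<n}. d x * (wV x * g0 x)) = (\<Sum>x\<in>{0..<n}. if x = k then wV x * g0 x else 0)"
      by (intro sum.cong) (auto simp: d_def)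
    hence s2: "(\<Sum>x\<in>{0..<n}. d x * (wV x * g0 x)) = wV k * g0 k" using k by simp
    have "2 * t * (Lf n wE g0 k - mu * (wV k * g0 k)) + t^2 * (Qf n wE d - mu * Nf n wV d) \<ge> 0" for t
    proof -
      have "mu * Nf n wV (\<lambda>x. g0 x + t * d x) \<le> Qf n wE (\<lambda>x. g0 x + t * d x)"
        using k g0i by (intro a) (simp add: d_def)
      moreover have q: "Qf n wE (\<lambda>x. g0 x + t * d x) = mu + 2 * t * Lf n wE g0 k + t^2 * Qf n wE d"
        using Qf_add[where n=n and wE=wE and g=g0 and t=t and h=d, OF symw] s1 unfolding mu_def by simp
      moreover have nq: "Nf n wV (\<lambda>x. g0 x + t * d x) = 1 + 2 * t * (wV k * g0 k) + t^2 * Nf n wV d"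
        using Nf_add[where n=n and wV=wV and g=g0 and t=t and h=d] s2 N1 by simp
      moreover have "2 * t * (Lf n wE g0 k - mu * (wV k * g0 k)) + t^2 * (Qf n wE d - mu * Nf n wV d)
          = Qf n wE (\<lambda>x. g0 x + t * d x) - mu * Nf n wV (\<lambda>x. g0 x + t * d x)"
        unfolding q nq by (simp add: algebra_simps)
      ultimately show ?thesis by linarith
    qed
    from quad_zero[OF this] show ?thesis by simp
  qed
  have mu_pos: "mu > 0"
  proof (rule ccontr)
    assume "\<not> mu > 0"
    hence "mu = 0" using Qf_nonneg[where n=n and wE=wE and h=g0, OF nn] unfolding mu_def by linarith
    hence z: "\<forall>v<n. g0 v = 0" using Qf_zero[where n=n and wE=wE and i=i and h=g0, OF nn pc i g0i] unfolding mu_def by blast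
    have "Nf n wV g0 = 0" unfolding Nf_def using z by simp
    thus False using N1 by simp
  qed
  have nzk: "\<exists>k<n. k \<noteq> i \<and> g0 k \<noteq> 0"
  proof (rule ccontr)
    assume "\<not> ?thesis"
    hence z: "\<forall>v<n. g0 v = 0" using g0i by metis
    have "Nf n wV g0 = 0" unfolding Nf_def using z by simp
    thus False using N1 by simp
  qed
  have ev: "eigenvector Mm (del_vec n i g0) (1 / mu)"
    unfolding eig_iff[where g=g0, OF g0i] using nzk b mu_pos by (auto simp: field_simps)
  have mem: "1 / mu \<in> {k. eigenvalue Mm k}" using ev unfolding eigenvalue_def by auto
  have le: "lam \<le> 1 / mu" if lm: "lam \<in> {k. eigenvalue Mm k}" for lam
  proof -
    obtain h where h: "h i = 0" "\<exists>k<n. k \<noteq> i \<and> h k \<noteq> 0"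
      "\<forall>k<n. k \<noteq> i \<longrightarrow> wV k * h k = lam * Lf n wE h k"
      using eig_ext[where lam=lam] lm by blast
    have Nq: "Nf n wV h = lam * Qf n wE h" using Nf_eig[where n=n and wE=wE and wV=wV and h=h and i=i and lam=lam, OF symw h(1)] h(3) by blast
    have Qp: "Qf n wE h > 0"
    proof (rule ccontr)
      assume "\<not> ?thesis"
      hence "Qf n wE h = 0" using Qf_nonneg[where n=n and wE=wE and h=h, OF nn] by simp
      thus False using Qf_zero[where n=n and wE=wE and i=i and h=h, OF nn pc i h(1)] h(2) by blast
    qed
    show ?thesis
    proof (cases "lam \<le> 0")
      case True have "1 / mu > 0" using mu_pos by simp
      thus ?thesis using True by linarith
    next
      case False
      have "mu * (lam * Qf n wE h) \<le> 1 * Qf n wE h" using a[where h=h, OF h(1)] Nq by simp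
      hence "mu * lam \<le> 1" using Qp by (simp add: mult.assoc[symmetric] mult_le_cancel_right)
      thus ?thesis using mu_pos by (simp add: field_simps mult.commute)
    qed
  qed
  have "Max {k. eigenvalue Mm k} = 1 / mu"
    using eig_fin mem le by (intro Max_eqI) auto
  thus ?thesis using mu_pos ev unfolding mu_def by simp
qed


lemma contQ: "continuous_on A (\<lambda>f::nat \<Rightarrow> real. Qf n wE f)"
  unfolding Qf_def
  by (intro continuous_intros continuous_on_subset[OF continuous_on_product_coordinates] subset_UNIV) simp

lemma contN: "continuous_on A (\<lambda>f::nat \<Rightarrow> real. Nf n wV f)"
  unfolding Nf_def
  by (intro continuous_intros continuous_on_subset[OF continuous_on_product_coordinates] subset_UNIV)

lemma exist_min:
  assumes gi: "g i = 0" and N1: "Nf n wV g = 1"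
  shows "\<exists>f0. f0 i = 0 \<and> Nf n wV f0 = 1 \<and> (\<forall>h. h i = 0 \<and> Nf n wV h = 1 \<longrightarrow> Qf n wE f0 \<le> Qf n wE h)"
proof -
  obtain C where C: "C \<ge> 0" "\<forall>v<n. \<forall>h. h i = 0 \<longrightarrow> \<bar>h v\<bar> \<le> C * sqrt (Qf n wE h)"
    using conn_bound[where n=n and wE=wE and i=i, OF nn pc i] by blast
  define Bd where "Bd = C * sqrt (Qf n wE g)"
  define S where "S = (\<lambda>j::nat. if j < n \<and> j \<noteq> i then {-Bd..Bd} else {0::real})"
  define K where "K = PiE UNIV S"
  define T where "T = K \<inter> {f. Nf n wV f = 1}"
  have "compactin (product_topology (\<lambda>_. euclidean) UNIV) K"
    unfolding K_def compactin_PiE by (auto simp: S_def)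
  hence cK: "compact K" unfolding euclidean_product_topology by simp
  have "closed {f::nat \<Rightarrow> real. Nf n wV f = 1}"
    by (rule closed_Collect_eq[OF contN continuous_on_const])
  hence cT: "compact T" unfolding T_def using cK by blast
  define trim where "trim = (\<lambda>h::nat \<Rightarrow> real. \<lambda>j. if j < n then h j else 0)"
  have trQ: "Qf n wE (trim h) = Qf n wE h" for h unfolding trim_def by (rule Qf_cong) simp
  have trN: "Nf n wV (trim h) = Nf n wV h" for h unfolding trim_def by (rule Nf_cong) simp
  have trT: "trim h \<in> T" if hi: "h i = 0" and hN: "Nf n wV h = 1" and hQ: "Qf n wE h \<le> Qf n wE g" for h
  proof -
    have "trim h j \<in> S j" for j
    proof (cases "j < n \<and> j \<noteq> i")
      case True
      have "\<bar>h j\<bar> \<le> C * sqrt (Qf n wE h)" using C(2) True hi by blast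
      also have "\<dots> \<le> Bd" unfolding Bd_def using C(1) hQ by (intro mult_left_mono) auto
      finally show ?thesis using True unfolding S_def trim_def by auto
    next
      case False thus ?thesis using hi unfolding S_def trim_def by auto
    qed
    thus ?thesis unfolding T_def K_def using trN[of h] hN by auto
  qed
  have ne: "T \<noteq> {}" using trT[OF gi N1] by auto
  obtain f0 where f0: "f0 \<in> T" "\<forall>y\<in>T. Qf n wE f0 \<le> Qf n wE y"
    using continuous_attains_inf[OF cT ne contQ] by blast
  have "f0 i \<in> S i" using f0(1) unfolding T_def K_def by (auto intro: PiE_mem)
  hence f0i: "f0 i = 0" unfolding S_def by auto
  have f0N: "Nf n wV f0 = 1" using f0(1) unfolding T_def by auto
  show ?thesis
  proof (intro exI[of _ f0] conjI allI impI f0i f0N)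
    fix h assume h: "h i = 0 \<and> Nf n wV h = 1"
    show "Qf n wE f0 \<le> Qf n wE h"
    proof (cases "Qf n wE h \<le> Qf n wE g")
      case True
      thus ?thesis using f0(2) trT[of h] h trQ[of h] by auto
    next
      case False
      have "Qf n wE f0 \<le> Qf n wE (trim g)" using f0(2) trT[OF gi N1] by auto
      thus ?thesis using trQ[of g] False by auto
    qed
  qed
qed

lemma main:
  assumes gi: "g i = 0" and wn1: "wnorm n wV g = 1"
  shows "minimizer n E wE wV i g \<longleftrightarrow>
    (let M = the (mat_inverse (del_rc i (laplacian n wE))) * del_rc i (vweight_mat n wV)
     in eigenvector M (del_vec n i g) (Max {k. eigenvalue M k}))"
proof -
  have wn: "wnorm n wV h = 1 \<longleftrightarrow> Nf n wV h = 1" for h unfolding wnorm_def Nf_def by simp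
  have en: "energy E wE h = Qf n wE h" for h
    by (rule energy_eq[of n E wE h, OF sg symw off])
  have N1: "Nf n wV g = 1" using wn1 wn by blast
  have minI: "minimizer n E wE wV i g \<longleftrightarrow>
      (\<forall>h. h i = 0 \<and> Nf n wV h = 1 \<longrightarrow> Qf n wE g \<le> Qf n wE h)"
    unfolding minimizer_def wn en using gi N1 by auto
  show ?thesis unfolding Let_def minI
  proof
    assume mn: "\<forall>h. h i = 0 \<and> Nf n wV h = 1 \<longrightarrow> Qf n wE g \<le> Qf n wE h"
    have "Qf n wE g > 0 \<and> eigenvector Mm (del_vec n i g) (1 / Qf n wE g)
     \<and> Max {k. eigenvalue Mm k} = 1 / Qf n wE g"
      using mn by (intro key[of g] gi N1) auto
    thus "eigenvector Mm (del_vec n i g) (Max {k. eigenvalue Mm k})" by simp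
  next
    assume ev: "eigenvector Mm (del_vec n i g) (Max {k. eigenvalue Mm k})"
    obtain f0 where f0: "f0 i = 0" "Nf n wV f0 = 1"
      "\<forall>h. h i = 0 \<and> Nf n wV h = 1 \<longrightarrow> Qf n wE f0 \<le> Qf n wE h"
      using exist_min[where g=g, OF gi N1] by blast
    have k: "Qf n wE f0 > 0 \<and> eigenvector Mm (del_vec n i f0) (1 / Qf n wE f0)
     \<and> Max {k. eigenvalue Mm k} = 1 / Qf n wE f0"
      using f0 by (intro key[of f0]) auto
    have rel: "\<forall>k<n. k \<noteq> i \<longrightarrow> wV k * g k = (1 / Qf n wE f0) * Lf n wE g k"
      using ev k unfolding eig_iff[where g=g, OF gi] by simp
    have "Nf n wV g = (1 / Qf n wE f0) * Qf n wE g"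
      using rel by (intro Nf_eig[where n=n and wE=wE and wV=wV and h=g and i=i, OF symw gi]) auto
    hence "Qf n wE g = Qf n wE f0" using N1 k by (simp add: field_simps)
    thus "\<forall>h. h i = 0 \<and> Nf n wV h = 1 \<longrightarrow> Qf n wE g \<le> Qf n wE h" using f0(3) by simp
  qed
qed

end

theorem lemma6:
  fixes n i :: nat and E :: "nat set set" and wE :: "nat \<Rightarrow> nat \<Rightarrow> real"
    and wV g :: "nat \<Rightarrow> real"
  assumes "simple_graph n E"
    and "i < n"
    and "\<And>u v. u < n \<Longrightarrow> v < n \<Longrightarrow> wE u v = wE v u"
    and "\<And>u v. u < n \<Longrightarrow> v < n \<Longrightarrow> wE u v \<ge> 0"
    and "\<And>u v. u < n \<Longrightarrow> v < n \<Longrightarrow> {u, v} \<notin> E \<Longrightarrow> wE u v = 0"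
    and "\<And>u. u < n \<Longrightarrow> wV u \<ge> 0"
    and "\<exists>u<n. wV u \<noteq> 0"
    and "positively_connected n wE"
    and "g i = 0" and "wnorm n wV g = 1"
  shows "minimizer n E wE wV i g \<longleftrightarrow>
    (let M = the (mat_inverse (del_rc i (laplacian n wE))) * del_rc i (vweight_mat n wV)
     in eigenvector M (del_vec n i g) (Max {k. eigenvalue M k}))"
  by (rule main[OF assms(1-6) assms(8-10)])


end
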